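(* Let $F$ be a Banach lattice, $\tau$ a linear topology on $F$ weaker than the norm topology, $E\subset F$ a closed sublattice, and $\pi$ a linear topology on $E$ with the Kadec-Pelczynski property (relative to the Banach lattice $E$). Suppose there is a linear map $T:F\to E$ which is $\tau$-to-$\pi$ continuous and such that $\mathrm{Id}_F-T$ is $\tau$-to-norm continuous. Then $\tau$ has the Kadec-Pelczynski property.
   Context: For a Banach lattice $G$ with unit sphere $\mathrm{S}_G$, a sequence $(e_n)$ is almost disjoint if there is a disjoint sequence $(g_n)\subset G$ ($|g_n|\wedge|g_m|=0$, $n\ne m$) with $\|e_n-g_n\|\to0$. A linear topology $\sigma$ on $G$ has the Kadec-Pelczynski property if whenever $(f_p)_{p\in P}\subset\mathrm{S}_G$ is a $\sigma$-null net and $(q_n)_{n\in\mathbb{N}}\subset P$, there are $p_n\in P$ with $p_n\ge q_n$ for all $n$ such that $(f_{p_n})_n$ is almost disjoint. *)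

theory Defs
  imports "HOL-Analysis.Analysis"
begin

definition labs :: "'a::{lattice, uminus} \<Rightarrow> 'a" where
  "labs x = sup x (- x)"

class banach_lattice = banach + ordered_real_vector + lattice +
  assumes lattice_norm: "sup x (- x) \<le> sup y (- y) \<Longrightarrow> norm x \<le> norm y"

definition closed_sublattice :: "'a::banach_lattice set \<Rightarrow> bool" where
  "closed_sublattice E \<longleftrightarrow> subspace E \<and> closed E \<and>
     (\<forall>x\<in>E. \<forall>y\<in>E. sup x y \<in> E \<and> inf x y \<in> E)"

definition linear_topology_on :: "'a::real_vector set \<Rightarrow> 'a topology \<Rightarrow> bool" where
  "linear_topology_on E \<sigma> \<longleftrightarrow> topspace \<sigma> = E \<and>
     continuous_map (prod_topology \<sigma> \<sigma>) \<sigma> (\<lambda>(x, y). x + y) \<and>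
     continuous_map (prod_topology euclideanreal \<sigma>) \<sigma> (\<lambda>(c, x). c *\<^sub>R x)"

definition disjoint_seq :: "(nat \<Rightarrow> 'a::banach_lattice) \<Rightarrow> bool" where
  "disjoint_seq g \<longleftrightarrow> (\<forall>n m. n \<noteq> m \<longrightarrow> inf (labs (g n)) (labs (g m)) = 0)"

definition almost_disjoint :: "'a::banach_lattice set \<Rightarrow> (nat \<Rightarrow> 'a) \<Rightarrow> bool" where
  "almost_disjoint G e \<longleftrightarrow> (\<exists>g. (\<forall>n. g n \<in> G) \<and> disjoint_seq g \<and>
      (\<lambda>n. norm (e n - g n)) \<longlonglongrightarrow> 0)"

definition directed_set :: "'p set \<Rightarrow> ('p \<Rightarrow> 'p \<Rightarrow> bool) \<Rightarrow> bool" where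
  "directed_set P le \<longleftrightarrow> P \<noteq> {} \<and> (\<forall>p\<in>P. le p p) \<and>
     (\<forall>p\<in>P. \<forall>q\<in>P. \<forall>r\<in>P. le p q \<longrightarrow> le q r \<longrightarrow> le p r) \<and>
     (\<forall>p\<in>P. \<forall>q\<in>P. \<exists>r\<in>P. le p r \<and> le q r)"

definition net_null :: "'a topology \<Rightarrow> 'p set \<Rightarrow> ('p \<Rightarrow> 'p \<Rightarrow> bool) \<Rightarrow> ('p \<Rightarrow> 'a::zero) \<Rightarrow> bool" where
  "net_null \<sigma> P le f \<longleftrightarrow> (\<forall>U. openin \<sigma> U \<longrightarrow> 0 \<in> U \<longrightarrow>
      (\<exists>p0\<in>P. \<forall>p\<in>P. le p0 p \<longrightarrow> f p \<in> U))"

definition KP_property :: "'p itself \<Rightarrow> 'a::banach_lattice set \<Rightarrow> 'a topology \<Rightarrow> bool" where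
  "KP_property _ G \<sigma> \<longleftrightarrow>
     (\<forall>(P::'p set) le f q. directed_set P le \<longrightarrow>
        (\<forall>p\<in>P. f p \<in> G \<and> norm (f p) = 1) \<longrightarrow> net_null \<sigma> P le f \<longrightarrow>
        (\<forall>n. q n \<in> P) \<longrightarrow>
        (\<exists>pn. (\<forall>n. pn n \<in> P \<and> le (q n) (pn n)) \<and> almost_disjoint G (f \<circ> pn)))"

end

theory Submission
  imports Defs
begin

lemma dir_bound3:
  assumes "directed_set P le" "a \<in> P" "b \<in> P" "c \<in> P"
  shows "\<exists>t\<in>P. le a t \<and> le b t \<and> le c t"
proof -
  from assms obtain s where s: "s \<in> P" "le a s" "le b s" unfolding directed_set_def by blast
  from assms s obtain t where t: "t \<in> P" "le s t" "le c t" unfolding directed_set_def by blast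
  show ?thesis using assms s t unfolding directed_set_def by blast
qed

lemma null_map:
  assumes "net_null \<tau> P le f" "continuous_map \<tau> \<pi> T" "T 0 = 0" "0 \<in> topspace \<tau>"
    "\<And>p. f p \<in> topspace \<tau>"
  shows "net_null \<pi> P le (\<lambda>p. T (f p))"
  unfolding net_null_def
proof (intro allI impI)
  fix U assume U: "openin \<pi> U" "0 \<in> U"
  have "openin \<tau> {x \<in> topspace \<tau>. T x \<in> U}"
    using openin_continuous_map_preimage[OF assms(2) U(1)] .
  moreover have "0 \<in> {x \<in> topspace \<tau>. T x \<in> U}" using assms U by auto
  ultimately obtain p0 where "p0 \<in> P" "\<forall>p\<in>P. le p0 p \<longrightarrow> f p \<in> {x \<in> topspace \<tau>. T x \<in> U}"
    using assms(1) unfolding net_null_def by blast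
  then show "\<exists>p0\<in>P. \<forall>p\<in>P. le p0 p \<longrightarrow> T (f p) \<in> U" by blast
qed

lemma null_small:
  assumes "net_null \<tau> P le f" "continuous_map \<tau> euclidean g" "g 0 = (0::'b::real_normed_vector)"
    "0 \<in> topspace \<tau>" "\<And>p. f p \<in> topspace \<tau>" "e > 0"
  shows "\<exists>r\<in>P. \<forall>p\<in>P. le r p \<longrightarrow> norm (g (f p)) < e"
proof -
  have "openin \<tau> {x \<in> topspace \<tau>. g x \<in> ball 0 e}"
    by (rule openin_continuous_map_preimage[OF assms(2)]) simp
  moreover have "0 \<in> {x \<in> topspace \<tau>. g x \<in> ball 0 e}" using assms by auto
  ultimately obtain p0 where "p0 \<in> P" "\<forall>p\<in>P. le p0 p \<longrightarrow> f p \<in> {x \<in> topspace \<tau>. g x \<in> ball 0 e}"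
    using assms(1) unfolding net_null_def by blast
  then show ?thesis by auto
qed

theorem mainTheorem15:
  fixes \<tau> :: "'a::banach_lattice topology"
    and E :: "'a set"
    and \<pi> :: "'a topology"
    and T :: "'a \<Rightarrow> 'a"
  assumes tau_lin: "linear_topology_on UNIV \<tau>"
    and tau_weaker: "\<And>U. openin \<tau> U \<Longrightarrow> open U"
    and E_sub: "closed_sublattice E"
    and pi_lin: "linear_topology_on E \<pi>"
    and pi_KP: "KP_property TYPE('p) E \<pi>"
    and T_lin: "linear T"
    and T_range: "\<And>x. T x \<in> E"
    and T_cont: "continuous_map \<tau> \<pi> T"
    and IdT_cont: "continuous_map \<tau> euclidean (\<lambda>x. x - T x)"
  shows "KP_property TYPE('p) UNIV \<tau>"
  unfolding KP_property_def
proof (intro allI impI)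
  fix P :: "'p set" and le f and q :: "nat \<Rightarrow> 'p"
  assume dir: "directed_set P le" and fn: "\<forall>p\<in>P. f p \<in> UNIV \<and> norm (f p) = 1"
    and null: "net_null \<tau> P le f" and qP: "\<forall>n. q n \<in> P"
  have trP: "\<And>a b c. a \<in> P \<Longrightarrow> b \<in> P \<Longrightarrow> c \<in> P \<Longrightarrow> le a b \<Longrightarrow> le b c \<Longrightarrow> le a c"
    using dir unfolding directed_set_def by blast
  have reflP: "\<And>a. a \<in> P \<Longrightarrow> le a a"
    using dir unfolding directed_set_def by blast
  have top: "topspace \<tau> = UNIV" using tau_lin unfolding linear_topology_on_def by simp
  have topE: "topspace \<pi> = E" using pi_lin unfolding linear_topology_on_def by simp
  have subE: "subspace E" using E_sub unfolding closed_sublattice_def by simp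
  have T0: "T 0 = 0" using T_lin linear_0 by blast
  have Tnull: "net_null \<pi> P le (\<lambda>p. T (f p))"
    using null_map[OF null T_cont T0] top by simp
  have small: "\<And>e. e > 0 \<Longrightarrow> \<exists>r\<in>P. \<forall>p\<in>P. le r p \<longrightarrow> norm (f p - T (f p)) < e"
    using null_small[OF null IdT_cont] T0 top by simp
  have nT: "\<And>p. p \<in> P \<Longrightarrow> \<bar>norm (T (f p)) - 1\<bar> \<le> norm (f p - T (f p))"
  proof -
    fix p assume "p \<in> P"
    then have "norm (f p) = 1" using fn by simp
    then show "\<bar>norm (T (f p)) - 1\<bar> \<le> norm (f p - T (f p))"
      using norm_triangle_ineq3[of "f p" "T (f p)"] by (simp add: abs_minus_commute)
  qed
  obtain p0 where p0: "p0 \<in> P" "\<forall>p\<in>P. le p0 p \<longrightarrow> norm (f p - T (f p)) < 1/2"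
    using small[of "1/2"] by auto
  define P' where "P' = {p\<in>P. le p0 p}"
  have P'P: "P' \<subseteq> P" unfolding P'_def by auto
  have pos: "\<And>p. p \<in> P' \<Longrightarrow> norm (T (f p)) > 1/2"
  proof -
    fix p assume "p \<in> P'"
    then have "p \<in> P" "norm (f p - T (f p)) < 1/2" using p0 unfolding P'_def by auto
    then show "norm (T (f p)) > 1/2" using nT[of p] by linarith
  qed
  define h where "h p = (1 / norm (T (f p))) *\<^sub>R T (f p)" for p
  have dirP': "directed_set P' le"
  proof -
    have p0P': "p0 \<in> P'" using p0 reflP unfolding P'_def by auto
    have ub: "\<forall>p\<in>P'. \<forall>q\<in>P'. \<exists>r\<in>P'. le p r \<and> le q r"
    proof (intro ballI)
      fix a b assume ab: "a \<in> P'" "b \<in> P'"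
      then obtain t where t: "t \<in> P" "le a t" "le b t" "le p0 t"
        using dir_bound3[OF dir, of a b p0] p0 P'P by auto
      then show "\<exists>r\<in>P'. le a r \<and> le b r" unfolding P'_def by auto
    qed
    show ?thesis unfolding directed_set_def
    proof (intro conjI)
      show "P' \<noteq> {}" using p0P' by auto
      show "\<forall>p\<in>P'. \<forall>q\<in>P'. \<exists>r\<in>P'. le p r \<and> le q r" by (rule ub)
      show "\<forall>p\<in>P'. le p p" using reflP P'P by auto
      show "\<forall>p\<in>P'. \<forall>q\<in>P'. \<forall>r\<in>P'. le p q \<longrightarrow> le q r \<longrightarrow> le p r"
        using trP P'P by (meson subsetD)
    qed
  qed
  have hE: "\<forall>p\<in>P'. h p \<in> E \<and> norm (h p) = 1"
  proof
    fix p assume p: "p \<in> P'"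
    have "h p \<in> E" unfolding h_def using subE T_range subspace_scale by blast
    moreover have "norm (h p) = 1" unfolding h_def using pos[OF p] by (auto simp del: norm_eq_zero)
    ultimately show "h p \<in> E \<and> norm (h p) = 1" by simp
  qed
  have hnull: "net_null \<pi> P' le h"
    unfolding net_null_def
  proof (intro allI impI)
    fix U assume U: "openin \<pi> U" "0 \<in> U"
    have cm: "continuous_map (prod_topology euclideanreal \<pi>) \<pi> (\<lambda>(c, x). c *\<^sub>R x)"
      using pi_lin unfolding linear_topology_on_def by simp
    define W where "W = {z \<in> topspace (prod_topology euclideanreal \<pi>). (\<lambda>(c, x). c *\<^sub>R x) z \<in> U}"
    have W: "openin (prod_topology euclideanreal \<pi>) W"
      unfolding W_def using openin_continuous_map_preimage[OF cm U(1)] .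
    have "0 \<in> E" using subE subspace_0 by blast
    then have "(1, 0) \<in> W" unfolding W_def using U topE by simp
    then have "\<exists>A V. openin euclideanreal A \<and> openin \<pi> V \<and> 1 \<in> A \<and> 0 \<in> V \<and> A \<times> V \<subseteq> W"
      by (rule W[unfolded openin_prod_topology_alt, THEN spec, THEN spec, THEN mp])
    then obtain A V where AV: "openin euclideanreal A" "openin \<pi> V" "1 \<in> A" "0 \<in> V" "A \<times> V \<subseteq> W"
      by blast
    have "open A" using AV(1) by (simp only: open_openin)
    then obtain d where d: "d > 0" "ball 1 d \<subseteq> A" using AV(3) by (meson open_contains_ball_eq)
    obtain r1 where r1: "r1 \<in> P" "\<forall>p\<in>P. le r1 p \<longrightarrow> T (f p) \<in> V"
      using Tnull[unfolded net_null_def, rule_format, OF AV(2) AV(4)] by blast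
    obtain r2 where r2: "r2 \<in> P" "\<forall>p\<in>P. le r2 p \<longrightarrow> norm (f p - T (f p)) < min (1/2) (d/2)"
      using small[of "min (1/2) (d/2)"] d by auto
    obtain t where t: "t \<in> P" "le r1 t" "le r2 t" "le p0 t"
      using dir_bound3[OF dir r1(1) r2(1) p0(1)] by auto
    have tP': "t \<in> P'" using t unfolding P'_def by auto
    have "\<forall>p\<in>P'. le t p \<longrightarrow> h p \<in> U"
    proof (intro ballI impI)
      fix p assume p: "p \<in> P'" "le t p"
      have pP: "p \<in> P" using p P'P by auto
      have trans: "le r1 p" "le r2 p" using trP[OF r1(1) t(1) pP] trP[OF r2(1) t(1) pP] t p by auto
      have TV: "T (f p) \<in> V" using r1 trans pP by auto
      define s where "s = norm (T (f p))"
      have s: "s > 1/2" using pos p s_def by auto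
      have s1: "\<bar>s - 1\<bar> < d/2" using nT[OF pP] r2 trans pP s_def by force
      have "\<bar>1 - 1/s\<bar> = \<bar>s - 1\<bar> / s" using s by (simp add: field_simps abs_div)
      also have "\<dots> \<le> 2 * \<bar>s - 1\<bar>"
      proof -
        have "1 * \<bar>s - 1\<bar> \<le> (2 * s) * \<bar>s - 1\<bar>"
          by (rule mult_right_mono) (use s in auto)
        then show ?thesis using s by (simp add: divide_le_eq mult.commute mult.left_commute)
      qed
      finally have "\<bar>1 - 1/s\<bar> < d" using s1 by argo
      then have "1/s \<in> ball 1 d" by (simp add: dist_real_def)
      then have "1/s \<in> A" using d(2) by blast
      then have "(1/s, T (f p)) \<in> A \<times> V" using TV by simp
      then have "(1/s, T (f p)) \<in> W" using AV(5) by blast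
      then show "h p \<in> U" unfolding W_def h_def s_def by auto
    qed
    then show "\<exists>p0\<in>P'. \<forall>p\<in>P'. le p0 p \<longrightarrow> h p \<in> U" using tP' by blast
  qed
  have "\<forall>n. \<exists>r. r \<in> P \<and> (\<forall>p\<in>P. le r p \<longrightarrow> norm (f p - T (f p)) < inverse (real (Suc n)))"
  proof
    fix n :: nat
    have "inverse (real (Suc n)) > 0" by simp
    from small[OF this] show "\<exists>r. r \<in> P \<and> (\<forall>p\<in>P. le r p \<longrightarrow> norm (f p - T (f p)) < inverse (real (Suc n)))"
      by blast
  qed
  then obtain r where r: "\<And>n. r n \<in> P" "\<And>n p. p \<in> P \<Longrightarrow> le (r n) p \<Longrightarrow> norm (f p - T (f p)) < inverse (real (Suc n))"
    by metis
  have "\<forall>n. \<exists>t. t \<in> P \<and> le (q n) t \<and> le (r n) t \<and> le p0 t"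
    using dir_bound3[OF dir] qP r(1) p0(1) by blast
  then obtain q' where q': "\<And>n. q' n \<in> P" "\<And>n. le (q n) (q' n)" "\<And>n. le (r n) (q' n)" "\<And>n. le p0 (q' n)"
    by metis
  have KP: "\<And>(P2::'p set) le2 f2 q2. directed_set P2 le2 \<Longrightarrow> (\<forall>p\<in>P2. f2 p \<in> E \<and> norm (f2 p) = 1) \<Longrightarrow>
      net_null \<pi> P2 le2 f2 \<Longrightarrow> (\<forall>n. q2 n \<in> P2) \<Longrightarrow>
      (\<exists>pn. (\<forall>n. pn n \<in> P2 \<and> le2 (q2 n) (pn n)) \<and> almost_disjoint E (f2 \<circ> pn))"
    using pi_KP unfolding KP_property_def by blast
  have q'P': "\<forall>n. q' n \<in> P'" using q' unfolding P'_def by auto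
  obtain pn where pn: "\<forall>n. pn n \<in> P' \<and> le (q' n) (pn n)" and ad: "almost_disjoint E (h \<circ> pn)"
    using KP[OF dirP' hE hnull q'P'] by blast
  obtain g where g: "\<forall>n. g n \<in> E" "disjoint_seq g" "(\<lambda>n. norm ((h \<circ> pn) n - g n)) \<longlonglongrightarrow> 0"
    using ad unfolding almost_disjoint_def by blast
  have pnP: "\<And>n. pn n \<in> P" using pn P'P by auto
  have leq: "\<And>n. le (q n) (pn n)" "\<And>n. le (r n) (pn n)"
  proof -
    fix n
    show "le (q n) (pn n)" using trP[OF qP[rule_format] q'(1) pnP] q'(2) pn by blast
    show "le (r n) (pn n)" using trP[OF r(1) q'(1) pnP] q'(3) pn by blast
  qed
  have bound: "\<And>n. norm (f (pn n) - g n) \<le> 2 * inverse (real (Suc n)) + norm (h (pn n) - g n)"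
  proof -
    fix n
    define x where "x = f (pn n)"
    define s where "s = norm (T x)"
    have s: "s > 1/2" using pos pn s_def x_def by auto
    have e: "norm (x - T x) < inverse (real (Suc n))" using r(2)[OF pnP leq(2)] x_def by simp
    have th: "T x - h (pn n) = (1 - 1/s) *\<^sub>R T x" unfolding h_def x_def s_def
      by (simp add: algebra_simps)
    have "norm (T x - h (pn n)) = \<bar>1 - 1/s\<bar> * s" unfolding th s_def by simp
    also have "\<dots> = \<bar>s - 1\<bar>" using s by (simp add: field_simps abs_mult)
    also have "\<dots> \<le> norm (x - T x)" using nT[OF pnP] x_def s_def by simp
    finally have e2: "norm (T x - h (pn n)) \<le> norm (x - T x)" .
    have "norm (x - g n) \<le> norm (x - T x) + norm (T x - h (pn n)) + norm (h (pn n) - g n)"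
      by (metis (no_types, lifting) add_mono_thms_linordered_semiring(3) diff_add_cancel norm_triangle_ineq order_trans add_diff_eq)
    then show "norm (f (pn n) - g n) \<le> 2 * inverse (real (Suc n)) + norm (h (pn n) - g n)"
      using e e2 unfolding x_def[symmetric] by linarith
  qed
  have lim: "(\<lambda>n. 2 * inverse (real (Suc n)) + norm (h (pn n) - g n)) \<longlonglongrightarrow> 0"
    using tendsto_add_zero[OF tendsto_mult_right_zero[OF LIMSEQ_inverse_real_of_nat] g(3)]
    by (simp add: o_def)
  have "(\<lambda>n. norm ((f \<circ> pn) n - g n)) \<longlonglongrightarrow> 0"
    by (rule Lim_null_comparison[OF _ lim]) (use bound in simp)
  then have "almost_disjoint UNIV (f \<circ> pn)"
    unfolding almost_disjoint_def using g(2) by blast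
  then show "\<exists>pn. (\<forall>n. pn n \<in> P \<and> le (q n) (pn n)) \<and> almost_disjoint UNIV (f \<circ> pn)"
    using pnP leq(1) by blast
qed

end
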